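(* Let $A=\{a_s(n_s)\}_{s=1}^k$ and $B=\{b_t(m_t)\}_{t=1}^l$ be two finite systems of residue classes, where $n_s,m_t$ are positive integers and $a_s,b_t$ are integers with $0\leqslant a_s<n_s$ for $s=1,\ldots,k$ and $0\leqslant b_t<m_t$ for $t=1,\ldots,l$. Let $p$ be a prime with $p>|S(n_1,\ldots,n_k,m_1,\ldots,m_l)|$, and let $\zeta_p$ be a primitive $p$th root of unity. Then $A$ and $B$ are covering equivalent if and only if $$\sum_{s=1}^k\frac{\zeta_p^{a_s}}{1-\zeta_p^{n_s}}=\sum_{t=1}^l\frac{\zeta_p^{b_t}}{1-\zeta_p^{m_t}}.$$
   Context: For a positive integer $n$ and $a\in\{0,\ldots,n-1\}$, $a(n)$ denotes the residue class $\{x\in\mathbb Z: x\equiv a \pmod n\}$. For a finite system $A=\{a_s(n_s)\}_{s=1}^k$ of residue classes (repetitions allowed), its covering function is $w_A:\mathbb Z\to\{0,1,2,\ldots\}$, $w_A(x)=|\{1\leqslant s\leqslant k: x\equiv a_s \pmod{n_s}\}|$ (the covering function of the empty system is the zero function). Two finite systems $A,B$ are covering equivalent if $w_A(x)=w_B(x)$ for all $x\in\mathbb Z$. For positive integers $n_1,\ldots,n_k$, $S(n_1,\ldots,n_k)=\{r/n_s: r=0,\ldots,n_s-1;\ s=1,\ldots,k\}$, a set of rational numbers, and $|S(\cdot)|$ denotes its cardinality. *)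

theory Defs
  imports Complex_Main "HOL-Computational_Algebra.Primes"
begin

text \<open>A finite system of residue classes a_s(n_s) is a list of pairs (a_s, n_s)
  (repetitions allowed).\<close>

type_synonym res_system = "(nat \<times> nat) list"

definition covering_fun :: "res_system \<Rightarrow> int \<Rightarrow> nat" where
  "covering_fun A x = length (filter (\<lambda>(a, n). x mod int n = int a mod int n) A)"

definition covering_equiv :: "res_system \<Rightarrow> res_system \<Rightarrow> bool" where
  "covering_equiv A B \<longleftrightarrow> (\<forall>x::int. covering_fun A x = covering_fun B x)"

definition S_set :: "nat list \<Rightarrow> rat set" where
  "S_set ns = {of_nat r / of_nat n | r n. n \<in> set ns \<and> r < n}"

definition primitive_root_of_unity :: "complex \<Rightarrow> nat \<Rightarrow> bool" where
  "primitive_root_of_unity z p \<longleftrightarrow> z ^ p = 1 \<and> (\<forall>k. 0 < k \<and> k < p \<longrightarrow> z ^ k \<noteq> 1)"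

end

theory Submission
  imports Defs "HOL-Computational_Algebra.Computational_Algebra" "HOL-Computational_Algebra.Field_as_Ring"
begin

definition ev :: "rat poly \<Rightarrow> complex \<Rightarrow> complex" where
  "ev f z = poly (map_poly of_rat f) z"

lemma map_poly_of_rat_add: "map_poly (of_rat :: rat \<Rightarrow> complex) (f + g) = map_poly of_rat f + map_poly of_rat g"
  by (rule poly_eqI) (simp add: coeff_map_poly of_rat_add)

lemma map_poly_of_rat_mult: "map_poly (of_rat :: rat \<Rightarrow> complex) (f * g) = map_poly of_rat f * map_poly of_rat g"
  by (rule poly_eqI) (simp add: coeff_map_poly coeff_mult of_rat_sum of_rat_mult)

lemma ev_add: "ev (f + g) z = ev f z + ev g z"
  by (simp add: ev_def map_poly_of_rat_add)

lemma ev_mult: "ev (f * g) z = ev f z * ev g z"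
  by (simp add: ev_def map_poly_of_rat_mult)

lemma ev_monom: "ev (monom c n) z = of_rat c * z ^ n"
  by (simp add: ev_def map_poly_monom poly_monom)

lemma ev_const: "ev [:c:] z = of_rat c"
  by (simp add: ev_def map_poly_pCons)

lemma ev_sum: "ev (sum f A) z = (\<Sum>x\<in>A. ev (f x) z)"
  proof (induction A rule: infinite_finite_induct)
  case (insert x F)
  then show ?case by (simp add: ev_add)
qed (auto simp: ev_def)

lemma ev_smult: "ev (smult c f) z = of_rat c * ev f z"
  by (simp add: ev_def map_poly_smult of_rat_mult)

definition cyc :: "nat \<Rightarrow> 'a::comm_ring_1 poly" where
  "cyc p = (\<Sum>k<p. monom 1 k)"

lemma coeff_cyc: "coeff (cyc p) k = (if k < p then 1 else 0)"
  by (simp add: cyc_def coeff_sum coeff_monom)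

lemma cyc_of_int: "map_poly of_int (cyc p :: int poly) = (cyc p :: rat poly)"
  by (rule poly_eqI) (simp add: coeff_map_poly coeff_cyc)

lemma ev_cyc: "ev (cyc p) z = (\<Sum>k<p. z ^ k)"
  by (simp add: cyc_def ev_sum ev_monom)

lemma clear_denom:
  fixes f :: "rat poly"
  shows "\<exists>c::int. c > 0 \<and> (\<exists>g::int poly. map_poly of_int g = smult (of_int c) f)"
proof (induction f rule: pCons_induct)
  case 0
  then show ?case by (intro exI[of _ 1]) (auto intro: exI[of _ 0])
next
  case (pCons a f)
  then obtain c g where c: "c > 0" and g: "map_poly of_int g = smult (of_int c) f" by blast
  obtain n d where nd: "quotient_of a = (n, d)" by (cases "quotient_of a") auto
  have d: "d > 0" using nd quotient_of_denom_pos by blast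
  have a: "a = of_int n / of_int d" using nd quotient_of_div by blast
  have "map_poly of_int (pCons (n * c) (smult d g)) = smult (of_int (c * d)) (pCons a f)"
    using d by (simp add: map_poly_pCons map_poly_smult g a mult.commute)
  then show ?case using c d by (intro exI[of _ "c*d"]) auto
qed


lemma eisenstein_aux:
  fixes g h :: "int poly" and p :: int
  assumes pr: "prime p"
    and low: "\<forall>k<degree (g*h). p dvd coeff (g*h) k"
    and lead: "\<not> p dvd lead_coeff (g*h)"
    and g0: "p dvd coeff g 0" and h0: "\<not> p dvd coeff h 0"
    and dh: "degree h > 0"
  shows False
proof -
  have gh: "g * h \<noteq> 0" using lead by auto
  hence gnz: "g \<noteq> 0" and hnz: "h \<noteq> 0" by auto
  have "lead_coeff (g*h) = lead_coeff g * lead_coeff h" by (rule lead_coeff_mult)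
  hence lg: "\<not> p dvd coeff g (degree g)" using lead by auto
  define k where "k = (LEAST k. \<not> p dvd coeff g k)"
  have k1: "\<not> p dvd coeff g k" unfolding k_def by (rule LeastI[of _ "degree g"]) (rule lg)
  have k2: "k \<le> degree g" unfolding k_def by (rule Least_le) (rule lg)
  have k3: "\<And>i. i < k \<Longrightarrow> p dvd coeff g i" unfolding k_def using not_less_Least by blast
  have deg: "degree (g*h) = degree g + degree h" using gnz hnz by (rule degree_mult_eq)
  have "k < degree (g*h)" using k2 deg dh by linarith
  hence pk: "p dvd coeff (g*h) k" using low by blast
  have "coeff (g*h) k = (\<Sum>i\<le>k. coeff g i * coeff h (k-i))" by (rule coeff_mult)
  also have "\<dots> = (\<Sum>i<k. coeff g i * coeff h (k-i)) + coeff g k * coeff h 0"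
    by (simp add: lessThan_Suc_atMost[symmetric])
  finally have eq: "coeff (g*h) k = (\<Sum>i<k. coeff g i * coeff h (k-i)) + coeff g k * coeff h 0" .
  have "p dvd (\<Sum>i<k. coeff g i * coeff h (k-i))"
    by (rule dvd_sum) (simp add: k3)
  hence "p dvd coeff g k * coeff h 0" using pk eq by (metis dvd_add_right_iff)
  thus False using pr k1 h0 by (simp add: prime_dvd_mult_iff)
qed

lemma eisenstein:
  fixes g h :: "int poly" and p :: int
  assumes pr: "prime p"
    and low: "\<forall>k<degree (g*h). p dvd coeff (g*h) k"
    and lead: "\<not> p dvd lead_coeff (g*h)"
    and c0: "\<not> p^2 dvd coeff (g*h) 0"
    and d: "degree (g*h) > 0"
  shows "degree g = 0 \<or> degree h = 0"
proof (rule ccontr)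
  assume "\<not> (degree g = 0 \<or> degree h = 0)"
  hence dg: "degree g > 0" and dh: "degree h > 0" by auto
  have "p dvd coeff (g*h) 0" using low d by blast
  hence "p dvd coeff g 0 * coeff h 0" by (simp add: coeff_mult_0)
  hence "p dvd coeff g 0 \<or> p dvd coeff h 0" using pr by (simp add: prime_dvd_mult_iff)
  moreover have "\<not> (p dvd coeff g 0 \<and> p dvd coeff h 0)"
  proof
    assume "p dvd coeff g 0 \<and> p dvd coeff h 0"
    hence "p^2 dvd coeff g 0 * coeff h 0" by (auto simp: power2_eq_square intro: mult_dvd_mono)
    thus False using c0 by (simp add: coeff_mult_0)
  qed
  ultimately show False
  proof (elim disjE)
    assume "p dvd coeff g 0"
    thus False using eisenstein_aux[OF pr low lead _ _ dh] \<open>\<not> (p dvd coeff g 0 \<and> p dvd coeff h 0)\<close> by blast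
  next
    assume a: "p dvd coeff h 0"
    have "\<not> p dvd coeff g 0" using a \<open>\<not> (p dvd coeff g 0 \<and> p dvd coeff h 0)\<close> by blast
    thus False using eisenstein_aux[of p h g] pr low lead a dg by (simp add: mult.commute)
  qed
qed


lemma cyc_telescope: "([:-1,1:] :: 'a::comm_ring_1 poly) * cyc n = monom 1 n - 1"
proof (induction n)
  case 0
  then show ?case by (simp add: cyc_def)
next
  case (Suc n)
  have m: "([:-1,1:] :: 'a poly) = monom 1 1 - 1" by (simp add: monom_Suc one_pCons)
  have "([:-1,1:] :: 'a poly) * cyc (Suc n) = [:-1,1:] * cyc n + [:-1,1:] * monom 1 n"
    by (simp add: cyc_def distrib_left)
  also have "[:-1,1:] * monom 1 n = (monom 1 (Suc n) - monom 1 n :: 'a poly)"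
    by (simp add: m left_diff_distrib mult_monom)
  finally show ?case using Suc by simp
qed

lemma pcompose_monom1: "pcompose (monom 1 n) q = (q :: 'a::comm_ring_1 poly) ^ n"
proof (induction n)
  case 0
  then show ?case by (simp add: pcompose_1 one_pCons[symmetric] monom_0)
next
  case (Suc n)
  have "monom 1 (Suc n) = (monom 1 1 * monom 1 n :: 'a poly)" by (simp add: mult_monom)
  moreover have "pcompose (monom 1 1) q = q" by (simp add: monom_Suc pcompose_pCons monom_0)
  ultimately show ?case using Suc by (simp add: pcompose_mult)
qed

definition cyc1 :: "nat \<Rightarrow> int poly" where
  "cyc1 p = pcompose (cyc p) [:1,1:]"

lemma coeff_cyc1: "coeff (cyc1 p) k = int (p choose Suc k)"
proof -
  have "pcompose ([:-1,1:] * cyc p) [:1,1:] = pcompose (monom 1 p - 1) [:1,1:]"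
    by (simp only: cyc_telescope)
  hence eq: "monom 1 1 * cyc1 p = [:1,1:] ^ p - (1 :: int poly)"
    by (simp add: pcompose_mult pcompose_diff pcompose_monom1 pcompose_1 cyc1_def pcompose_pCons monom_Suc monom_0)
  have "coeff (cyc1 p) k = coeff (monom 1 1 * cyc1 p) (Suc k)"
    by (simp add: coeff_monom_mult)
  also have "\<dots> = coeff ([:1,1:] ^ p) (Suc k)" unfolding eq by (simp add: one_pCons)
  also have "\<dots> = int (p choose Suc k)"
  proof (cases "Suc k \<le> p")
    case True
    then show ?thesis by (simp add: coeff_linear_poly_power)
  next
    case False
    then show ?thesis by (simp add: coeff_eq_0 degree_linear_power)
  qed
  finally show ?thesis .
qed

lemma degree_cyc1: assumes "p > 0" shows "degree (cyc1 p) = p - 1"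
proof (rule antisym)
  show "degree (cyc1 p) \<le> p - 1"
    by (rule degree_le) (auto simp: coeff_cyc1)
  show "p - 1 \<le> degree (cyc1 p)"
    by (rule le_degree) (use assms in \<open>simp add: coeff_cyc1\<close>)
qed

lemma cyc_int_irred:
  assumes pr: "prime p" and eq: "(cyc p :: int poly) = g * h"
  shows "degree g = 0 \<or> degree h = 0"
proof -
  have p0: "p > 0" using pr prime_gt_0_nat by blast
  have p2: "p \<ge> 2" using pr prime_ge_2_nat by blast
  define g1 where "g1 = pcompose g [:1,1:]"
  define h1 where "h1 = pcompose h [:1,1:]"
  have e1: "cyc1 p = g1 * h1" by (simp add: cyc1_def g1_def h1_def eq pcompose_mult)
  have dg: "degree g1 = degree g" "degree h1 = degree h" by (simp_all add: g1_def h1_def degree_pcompose)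
  have prI: "prime (int p)" using pr by simp
  have "degree g1 = 0 \<or> degree h1 = 0"
  proof (rule eisenstein[OF prI])
    show "\<forall>k<degree (g1 * h1). int p dvd coeff (g1 * h1) k"
    proof (intro allI impI)
      fix k assume "k < degree (g1*h1)"
      hence "Suc k < p" using degree_cyc1[OF p0] e1 by simp
      hence "p dvd (p choose Suc k)" using pr by (intro dvd_choose_prime) auto
      thus "int p dvd coeff (g1 * h1) k" by (simp flip: e1 add: coeff_cyc1)
    qed
    show "\<not> int p dvd lead_coeff (g1 * h1)"
      using p0 p2 by (simp flip: e1 add: coeff_cyc1 degree_cyc1)
    show "\<not> (int p)^2 dvd coeff (g1 * h1) 0"
    proof
      assume "(int p)^2 dvd coeff (g1 * h1) 0"
      hence "(int p)^2 dvd int p * 1" by (simp flip: e1 add: coeff_cyc1)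
      hence "int p dvd 1" using p0 by (simp add: power2_eq_square)
      thus False using p2 by simp
    qed
    show "0 < degree (g1 * h1)" using p2 by (simp flip: e1 add: degree_cyc1)
  qed
  thus ?thesis using dg by simp
qed


lemma map_poly_of_int_mult: "map_poly (of_int :: int \<Rightarrow> rat) (f * g) = map_poly of_int f * map_poly of_int g"
  by (rule poly_eqI) (simp add: coeff_map_poly coeff_mult)

lemma map_poly_of_int_inj: "map_poly (of_int :: int \<Rightarrow> rat) f = map_poly of_int g \<Longrightarrow> f = g"
  by (auto simp: poly_eq_iff coeff_map_poly)

lemma content_cyc: assumes "p > 0" shows "content (cyc p :: int poly) = 1"
proof -
  have "content (cyc p :: int poly) dvd coeff (cyc p) 0" by (rule content_dvd_coeff)
  hence "content (cyc p :: int poly) dvd 1" using assms by (simp add: coeff_cyc)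
  hence "\<bar>content (cyc p :: int poly)\<bar> = 1" by simp
  moreover have "normalize (content (cyc p :: int poly)) = content (cyc p)" by (rule normalize_content)
  ultimately show ?thesis by (metis abs_eq_iff normalize_int_def)
qed

lemma cyc_rat_irred:
  assumes pr: "prime p" and eq: "(cyc p :: rat poly) = g * h"
  shows "degree g = 0 \<or> degree h = 0"
proof -
  have p0: "p > 0" using pr prime_gt_0_nat by blast
  obtain c1 g' where c1: "c1 > 0" and g': "map_poly of_int g' = smult (of_int c1) g"
    using clear_denom by blast
  obtain c2 h' where c2: "c2 > 0" and h': "map_poly of_int h' = smult (of_int c2) h"
    using clear_denom by blast
  have "map_poly of_int (g' * h') = smult (of_int (c1 * c2)) (cyc p :: rat poly)"
    by (simp add: map_poly_of_int_mult g' h' eq mult.commute mult.left_commute)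
  also have "\<dots> = map_poly of_int (smult (c1 * c2) (cyc p))"
    by (simp add: map_poly_smult cyc_of_int)
  finally have e: "g' * h' = smult (c1 * c2) (cyc p)" by (rule map_poly_of_int_inj)
  have "primitive_part g' * primitive_part h' = primitive_part (smult (c1 * c2) (cyc p))"
    by (simp add: e[symmetric] primitive_part_mult)
  also have "\<dots> = cyc p"
    using c1 c2 p0 by (simp add: primitive_part_smult primitive_part_prim content_cyc)
  finally have "degree (primitive_part g') = 0 \<or> degree (primitive_part h') = 0"
    using cyc_int_irred[OF pr] by metis
  moreover have "degree g' = degree g"
  proof -
    have "degree (map_poly (of_int :: int \<Rightarrow> rat) g') = degree g'" by (simp add: degree_map_poly)
    thus ?thesis using g' c1 by simp
  qed
  moreover have "degree h' = degree h"
  proof -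
    have "degree (map_poly (of_int :: int \<Rightarrow> rat) h') = degree h'" by (simp add: degree_map_poly)
    thus ?thesis using h' c2 by simp
  qed
  ultimately show ?thesis by simp
qed


lemma ev_cyc_root:
  fixes w :: complex
  assumes "w ^ p = 1" "w \<noteq> 1"
  shows "ev (cyc p) w = 0"
  using assms by (simp add: ev_cyc sum_gp_strict)

lemma prim_pow_ne1:
  fixes z :: complex
  assumes "z ^ p = 1" "\<forall>k. 0 < k \<and> k < p \<longrightarrow> z ^ k \<noteq> 1" "\<not> p dvd u" "p > 0"
  shows "z ^ u \<noteq> 1"
proof -
  have "u = p * (u div p) + u mod p" by simp
  hence "z ^ u = (z ^ p) ^ (u div p) * z ^ (u mod p)" by (metis power_add power_mult)
  hence "z ^ u = z ^ (u mod p)" using assms(1) by simp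
  moreover have "0 < u mod p" using assms(3) by (simp add: mod_greater_zero_iff_not_dvd)
  moreover have "u mod p < p" using assms(4) by simp
  ultimately show ?thesis using assms(2) by metis
qed

lemma core_lemma:
  fixes z :: complex and c :: "nat \<Rightarrow> int"
  assumes pr: "prime p" and zp: "z ^ p = 1" and prim: "\<forall>k. 0 < k \<and> k < p \<longrightarrow> z ^ k \<noteq> 1"
    and s0: "(\<Sum>x<N. of_int (c x) * z ^ x) = 0" and u: "\<not> p dvd u"
  shows "(\<Sum>x<N. of_int (c x) * (z ^ u) ^ x) = 0"
proof -
  have p0: "p > 0" using pr prime_gt_0_nat by blast
  have p1: "1 < p" using pr prime_gt_1_nat by blast
  define G :: "rat poly" where "G = (\<Sum>x<N. monom (of_int (c x)) x)"
  define P :: "rat poly" where "P = cyc p"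
  have evG: "ev G w = (\<Sum>x<N. of_int (c x) * w ^ x)" for w
    by (simp add: G_def ev_sum ev_monom)
  have z1: "z \<noteq> 1" using prim p1 by (metis power_one_right zero_less_one)
  have zu1: "z ^ u \<noteq> 1" by (rule prim_pow_ne1[OF zp prim u p0])
  have zup: "(z ^ u) ^ p = 1" using zp by (metis power_mult_distrib power_one power_mult mult.commute)
  have Pz: "ev P z = 0" unfolding P_def by (rule ev_cyc_root[OF zp z1])
  have Pzu: "ev P (z ^ u) = 0" unfolding P_def by (rule ev_cyc_root[OF zup zu1])
  have Pnz: "P \<noteq> 0"
  proof
    assume "P = 0" hence "coeff P 0 = 0" by simp
    thus False using p0 by (simp add: P_def coeff_cyc)
  qed
  define D where "D = gcd G P"
  have "fst (bezout_coefficients G P) * G + snd (bezout_coefficients G P) * P = D"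
    unfolding D_def by (rule bezout_coefficients_fst_snd)
  hence "ev D z = ev (fst (bezout_coefficients G P)) z * ev G z + ev (snd (bezout_coefficients G P)) z * ev P z"
    by (metis ev_add ev_mult)
  hence Dz: "ev D z = 0" using s0 evG Pz by simp
  have "D dvd P" unfolding D_def by simp
  then obtain K where K: "P = D * K" by blast
  have "D dvd G" unfolding D_def by simp
  then obtain E where E: "G = D * E" by blast
  have "degree D = 0 \<or> degree K = 0" using cyc_rat_irred[OF pr] K by (simp add: P_def)
  thus ?thesis
  proof
    assume "degree D = 0"
    hence "D = [:coeff D 0:]" by (rule degree_0_id[symmetric])
    moreover have "D \<noteq> 0" using Pnz K by auto
    ultimately have "coeff D 0 \<noteq> 0" by (metis pCons_0_0)
    hence "ev D z \<noteq> 0" by (subst \<open>D = [:coeff D 0:]\<close>) (simp add: ev_const)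
    thus ?thesis using Dz by simp
  next
    assume "degree K = 0"
    hence Kc: "K = [:coeff K 0:]" by (rule degree_0_id[symmetric])
    have "K \<noteq> 0" using Pnz K by auto
    hence k0: "coeff K 0 \<noteq> 0" using Kc by (metis pCons_0_0)
    have "ev P (z^u) = ev D (z^u) * of_rat (coeff K 0)" by (subst K, subst Kc) (simp add: ev_smult mult.commute)
    hence "ev D (z^u) = 0" using Pzu k0 by simp
    hence "ev G (z^u) = 0" by (simp add: E ev_mult)
    thus ?thesis by (simp add: evG)
  qed
qed


lemma sum_split_block:
  fixes f :: "nat \<Rightarrow> 'a::comm_monoid_add"
  shows "(\<Sum>x<m + n. f x) = (\<Sum>x<m. f x) + (\<Sum>i<n. f (m + i))"
  by (induction n) (simp_all add: add.assoc)

lemma single_gen_aux: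
  fixes z :: complex
  assumes "a < n"
  shows "(\<Sum>x<n * K. if x mod n = a then z ^ x else 0) = z ^ a * (\<Sum>q<K. (z ^ n) ^ q)"
proof (induction K)
  case 0
  then show ?case by simp
next
  case (Suc K)
  have "(\<Sum>x<n * Suc K. if x mod n = a then z ^ x else 0)
      = (\<Sum>x<n * K. if x mod n = a then z ^ x else 0) + (\<Sum>i<n. if (n * K + i) mod n = a then z ^ (n * K + i) else 0)"
  proof -
    have e: "n * Suc K = n * K + n" by simp
    show ?thesis by (simp only: e sum_split_block)
  qed
  also have "(\<Sum>i<n. if (n * K + i) mod n = a then z ^ (n * K + i) else 0) = (\<Sum>i<n. if i = a then z ^ (n * K + i) else 0)"
    by (rule sum.cong) auto
  also have "\<dots> = z ^ (n * K + a)" using assms by simp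
  also have "z ^ (n * K + a) = z ^ a * (z ^ n) ^ K" by (simp add: power_add power_mult[symmetric] mult.commute)
  finally show ?case using Suc by (simp add: distrib_left)
qed

lemma single_gen:
  fixes z :: complex
  assumes "a < n" "n dvd N" "z ^ n \<noteq> 1"
  shows "(\<Sum>x<N. if x mod n = a then z ^ x else 0) = (1 - z ^ N) * (z ^ a / (1 - z ^ n))"
proof -
  obtain K where N: "N = n * K" using assms(2) by blast
  have "(\<Sum>x<N. if x mod n = a then z ^ x else 0) = z ^ a * (\<Sum>q<K. (z ^ n) ^ q)"
    unfolding N by (rule single_gen_aux[OF assms(1)])
  also have "\<dots> = z ^ a * ((1 - (z ^ n) ^ K) / (1 - z ^ n))"
    using assms(3) by (simp add: sum_gp_strict)
  also have "(z ^ n) ^ K = z ^ N" by (simp add: N power_mult)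
  finally show ?thesis by simp
qed

lemma covering_fun_Nil: "covering_fun [] x = 0"
  by (simp add: covering_fun_def)

lemma covering_fun_Cons: "covering_fun ((a, n) # A) x = (if x mod int n = int a mod int n then 1 else 0) + covering_fun A x"
  by (simp add: covering_fun_def)

lemma gen_fun:
  fixes z :: complex
  assumes "\<forall>(a, n) \<in> set A. a < n \<and> n dvd N \<and> z ^ n \<noteq> 1"
  shows "(\<Sum>x<N. of_nat (covering_fun A (int x)) * z ^ x) = (1 - z ^ N) * (\<Sum>(a, n) \<leftarrow> A. z ^ a / (1 - z ^ n))"
  using assms
proof (induction A)
  case Nil
  then show ?case by (simp add: covering_fun_Nil)
next
  case (Cons h A)
  obtain a n where h: "h = (a, n)" by (cases h)
  have an: "a < n" "n dvd N" "z ^ n \<noteq> 1" using Cons.prems h by auto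
  have IH: "(\<Sum>x<N. of_nat (covering_fun A (int x)) * z ^ x) = (1 - z ^ N) * (\<Sum>(a, n) \<leftarrow> A. z ^ a / (1 - z ^ n))"
    using Cons by auto
  have eq: "(int x mod int n = int a mod int n) \<longleftrightarrow> x mod n = a" for x
    using an(1) by (metis mod_less of_nat_eq_iff zmod_int)
  have "(\<Sum>x<N. of_nat (covering_fun (h # A) (int x)) * z ^ x)
      = (\<Sum>x<N. (if x mod n = a then z ^ x else 0)) + (\<Sum>x<N. of_nat (covering_fun A (int x)) * z ^ x)"
  proof -
    have "of_nat (covering_fun (h # A) (int x)) * z ^ x = (if x mod n = a then z ^ x else 0) + of_nat (covering_fun A (int x)) * z ^ x" for x
      by (simp add: h covering_fun_Cons eq distrib_right)
    thus ?thesis by (simp add: sum.distrib)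
  qed
  also have "\<dots> = (1 - z ^ N) * (z ^ a / (1 - z ^ n)) + (1 - z ^ N) * (\<Sum>(a, n) \<leftarrow> A. z ^ a / (1 - z ^ n))"
    by (simp add: single_gen[OF an] IH)
  finally show ?case by (simp add: h distrib_left)
qed

lemma covering_fun_mod:
  assumes "\<forall>(a, n) \<in> set A. n dvd N"
  shows "covering_fun A x = covering_fun A (x mod int N)"
  unfolding covering_fun_def
proof (rule arg_cong[where f = length], rule filter_cong[OF refl])
  fix h assume "h \<in> set A"
  then obtain a n where h: "h = (a, n)" "n dvd N" using assms by (cases h) auto
  have "x mod int N mod int n = x mod int n" using h(2) by (simp add: mod_mod_cancel)
  thus "(case h of (a, n) \<Rightarrow> x mod int n = int a mod int n) = (case h of (a, n) \<Rightarrow> x mod int N mod int n = int a mod int n)"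
    by (simp add: h)
qed


definition lin :: "complex set \<Rightarrow> complex poly" where
  "lin V = (\<Prod>w\<in>V. [:-w, 1:])"

lemma poly_lin: "poly (lin V) z = (\<Prod>w\<in>V. z - w)"
  by (simp add: lin_def poly_prod)

lemma degree_lin: "finite V \<Longrightarrow> degree (lin V) = card V"
  unfolding lin_def by (subst degree_prod_eq_sum_degree) auto

lemma lead_lin: "lead_coeff (lin V) = 1"
  unfolding lin_def by (simp add: lead_coeff_prod)

lemma lin_unity:
  assumes "n > 0"
  shows "lin {w. w ^ n = 1} = monom 1 n - 1"
proof -
  have fin: "finite {w::complex. w ^ n = 1}" using assms by (intro finite_roots_unity) simp
  have card: "card {w::complex. w ^ n = 1} = n" using assms by (rule card_roots_unity_eq)
  show ?thesis
  proof (rule poly_eqI_degree_lead_coeff[where n = n and A = "{w. w ^ n = 1}"])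
    show "coeff (lin {w. w ^ n = 1}) n = coeff (monom 1 n - 1) n"
      using lead_lin[of "{w. w ^ n = 1}"] degree_lin[OF fin] card assms by simp
    show "n \<le> card {w::complex. w ^ n = 1}" using card by simp
    show "degree (lin {w. w ^ n = 1}) \<le> n" using degree_lin[OF fin] card by simp
    show "degree (monom 1 n - 1 :: complex poly) \<le> n"
      by (rule order.trans[OF degree_diff_le]) (auto simp: degree_monom_eq)
    fix z :: complex assume "z \<in> {w. w ^ n = 1}"
    hence "poly (lin {w. w ^ n = 1}) z = 0" using fin by (simp add: poly_lin prod_zero_iff)
    thus "poly (lin {w. w ^ n = 1}) z = poly (monom 1 n - 1) z" using \<open>z \<in> _\<close> by (simp add: poly_monom)
  qed
qed

lemma prod_unity:
  assumes "n > 0"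
  shows "(\<Prod>w\<in>{w. w ^ n = 1}. z - w) = (z::complex) ^ n - 1"
  using arg_cong[OF lin_unity[OF assms], of "\<lambda>q. poly q z"] by (simp add: poly_lin poly_monom)

lemma aux_neg_div: "(c::complex) \<noteq> 0 \<Longrightarrow> (- c) * (x / c) = - x" by simp

definition Qp :: "complex set \<Rightarrow> nat \<Rightarrow> nat \<Rightarrow> complex poly" where
  "Qp W a n = - (monom 1 a * lin (W - {w. w ^ n = 1}))"

lemma poly_Qp:
  assumes fin: "finite W" and sub: "{w. w ^ n = 1} \<subseteq> W" and n: "n > 0" and z: "z ^ n \<noteq> 1"
  shows "poly (Qp W a n) z = poly (lin W) z * (z ^ a / (1 - z ^ n))"
proof -
  have "poly (lin W) z = (\<Prod>w\<in>{w. w ^ n = 1}. z - w) * (\<Prod>w\<in>W - {w. w ^ n = 1}. z - w)"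
    unfolding poly_lin using prod.subset_diff[OF sub fin, of "\<lambda>w. z - w"] by (simp add: mult.commute)
  also have "\<dots> = (z ^ n - 1) * poly (lin (W - {w. w ^ n = 1})) z"
    by (simp add: prod_unity[OF n] poly_lin)
  finally have e: "poly (lin W) z = (z ^ n - 1) * poly (lin (W - {w. w ^ n = 1})) z" .
  have z1: "1 - z ^ n \<noteq> 0" using z by simp
  have m: "(z ^ n - 1) * (z ^ a / (1 - z ^ n)) = -(z ^ a)"
  proof -
    have "z ^ n - 1 = - (1 - z ^ n)" by simp
    thus ?thesis using aux_neg_div[OF z1] by metis
  qed
  have "poly (Qp W a n) z = - (z ^ a * poly (lin (W - {w. w ^ n = 1})) z)"
    by (simp add: Qp_def poly_monom)
  also have "\<dots> = ((z ^ n - 1) * (z ^ a / (1 - z ^ n))) * poly (lin (W - {w. w ^ n = 1})) z"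
    by (simp only: m) simp
  also have "\<dots> = poly (lin W) z * (z ^ a / (1 - z ^ n))"
    by (simp only: e mult.commute mult.left_commute)
  finally show ?thesis .
qed

lemma degree_Qp:
  assumes fin: "finite W" and sub: "{w. w ^ n = 1} \<subseteq> W" and n: "n > 0" and a: "a < n"
  shows "degree (Qp W a n) < card W"
proof -
  have cn: "card {w::complex. w ^ n = 1} = n" using n by (rule card_roots_unity_eq)
  have fn: "finite {w::complex. w ^ n = 1}" using n by (intro finite_roots_unity) simp
  have c: "card (W - {w. w ^ n = 1}) = card W - n" using fin sub cn by (simp add: card_Diff_subset fn)
  have "card W \<ge> n" using cn sub fin by (metis card_mono)
  have "degree (Qp W a n) \<le> a + card (W - {w. w ^ n = 1})"
    unfolding Qp_def degree_minus
    by (rule order.trans[OF degree_mult_le]) (simp add: degree_monom_eq degree_lin fin)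
  thus ?thesis using c a \<open>card W \<ge> n\<close> by linarith
qed

definition PP :: "complex set \<Rightarrow> (nat \<times> nat) list \<Rightarrow> complex poly" where
  "PP W A = (\<Sum>(a, n) \<leftarrow> A. Qp W a n)"

lemma poly_PP:
  assumes fin: "finite W" and "\<forall>(a, n) \<in> set A. 0 < n \<and> {w. w ^ n = 1} \<subseteq> W \<and> z ^ n \<noteq> 1"
  shows "poly (PP W A) z = poly (lin W) z * (\<Sum>(a, n) \<leftarrow> A. z ^ a / (1 - z ^ n))"
  using assms(2)
proof (induction A)
  case Nil
  then show ?case by (simp add: PP_def)
next
  case (Cons h A)
  obtain a n where h: "h = (a, n)" by (cases h)
  have "poly (PP W (h # A)) z = poly (Qp W a n) z + poly (PP W A) z" by (simp add: PP_def h)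
  also have "poly (Qp W a n) z = poly (lin W) z * (z ^ a / (1 - z ^ n))"
    using Cons.prems h by (intro poly_Qp fin) auto
  also have "poly (PP W A) z = poly (lin W) z * (\<Sum>(a, n) \<leftarrow> A. z ^ a / (1 - z ^ n))"
    using Cons by auto
  finally show ?case by (simp add: h distrib_left)
qed

lemma degree_PP:
  assumes fin: "finite W" and "\<forall>(a, n) \<in> set A. 0 < n \<and> a < n \<and> {w. w ^ n = 1} \<subseteq> W" and "card W > 0"
  shows "degree (PP W A) < card W"
  using assms(2)
proof (induction A)
  case Nil
  then show ?case using assms(3) by (simp add: PP_def)
next
  case (Cons h A)
  obtain a n where h: "h = (a, n)" by (cases h)
  have "degree (Qp W a n) < card W" using Cons.prems h by (intro degree_Qp fin) auto
  moreover have "degree (PP W A) < card W" using Cons by auto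
  moreover have "PP W (h # A) = Qp W a n + PP W A" by (simp add: PP_def h)
  ultimately show ?case using degree_add_le_max[of "Qp W a n" "PP W A"] by (simp only:)
qed


lemma S_set_eq: "S_set ns = (\<Union>n\<in>set ns. (\<lambda>r. of_nat r / of_nat n :: rat) ` {..<n})"
  unfolding S_set_def by auto

lemma finite_S_set: "finite (S_set ns)"
  unfolding S_set_eq by auto

lemma card_S_set_ge:
  assumes "n \<in> set ns" "n > 0"
  shows "n \<le> card (S_set ns)"
proof -
  have inj: "inj_on (\<lambda>r. of_nat r / of_nat n :: rat) {..<n}"
    using assms(2) by (auto simp: inj_on_def)
  have "n = card ((\<lambda>r. of_nat r / of_nat n :: rat) ` {..<n})"
    using card_image[OF inj] by simp
  also have "\<dots> \<le> card (S_set ns)"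
    using assms(1) by (intro card_mono finite_S_set) (auto simp: S_set_eq)
  finally show ?thesis .
qed

lemma roots_sub_S:
  assumes "n \<in> set ns" "n > 0" "(w::complex) ^ n = 1"
  shows "w \<in> (\<lambda>q. cis (2 * pi * of_rat q)) ` S_set ns"
proof -
  have "w \<in> (\<lambda>k. cis (2 * pi * real k / real n)) ` {..<n}"
    using bij_betw_roots_unity[OF assms(2)] assms(3) by (auto simp: bij_betw_def)
  then obtain k where k: "k < n" "w = cis (2 * pi * real k / real n)" by auto
  have "of_rat (of_nat k / of_nat n) = real k / real n" by (simp add: of_rat_divide)
  hence "w = cis (2 * pi * of_rat (of_nat k / of_nat n))" using k by simp
  moreover have "of_nat k / of_nat n \<in> S_set ns" using assms k by (auto simp: S_set_eq)
  ultimately show ?thesis by blast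
qed

theorem theorem1p1:
  fixes A B :: res_system and p :: nat and \<zeta> :: complex
  assumes "\<forall>(a, n) \<in> set A. 0 < n \<and> a < n"
      and "\<forall>(b, m) \<in> set B. 0 < m \<and> b < m"
      and "prime p"
      and "p > card (S_set (map snd A @ map snd B))"
      and "primitive_root_of_unity \<zeta> p"
  shows "covering_equiv A B \<longleftrightarrow>
         (\<Sum>(a, n) \<leftarrow> A. \<zeta> ^ a / (1 - \<zeta> ^ n)) = (\<Sum>(b, m) \<leftarrow> B. \<zeta> ^ b / (1 - \<zeta> ^ m))"
proof -
  note hA = assms(1) and hB = assms(2) and pr = assms(3) and pS = assms(4)
  define ns where "ns = map snd A @ map snd B"
  define M where "M = set ns"
  have Mpos: "\<And>n. n \<in> M \<Longrightarrow> n > 0" using hA hB by (auto simp: M_def ns_def)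
  have AM: "\<And>a n. (a, n) \<in> set A \<Longrightarrow> n \<in> M" by (force simp: M_def ns_def)
  have BM: "\<And>a n. (a, n) \<in> set B \<Longrightarrow> n \<in> M" by (force simp: M_def ns_def)
  have finM: "finite M" by (simp add: M_def)
  have p0: "p > 0" using pr prime_gt_0_nat by blast
  have Mp: "n < p" if "n \<in> M" for n
  proof -
    have "n \<le> card (S_set ns)" using that Mpos[OF that] unfolding M_def by (rule card_S_set_ge)
    thus ?thesis using pS by (simp add: ns_def)
  qed
  define N where "N = (\<Prod>n\<in>M. n)"
  have N0: "N > 0" using Mpos finM by (simp add: N_def)
  have dvdN: "\<And>n. n \<in> M \<Longrightarrow> n dvd N" unfolding N_def using dvd_prodI[OF finM, of _ "\<lambda>x. x"] by blast
  have pN: "\<not> p dvd N"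
  proof
    assume "p dvd N"
    then obtain n where "n \<in> M" "p dvd n" using prime_dvd_prod_iff[OF finM pr] by (auto simp: N_def)
    moreover have "n > 0" "n < p" using \<open>n \<in> M\<close> Mpos Mp by auto
    ultimately show False using dvd_imp_le by fastforce
  qed
  have zp: "\<zeta> ^ p = 1" and prim: "\<forall>k. 0 < k \<and> k < p \<longrightarrow> \<zeta> ^ k \<noteq> 1"
    using assms(5) by (auto simp: primitive_root_of_unity_def)
  have powne: "\<And>u. \<not> p dvd u \<Longrightarrow> \<zeta> ^ u \<noteq> 1" using prim_pow_ne1[OF zp prim _ p0] by blast
  define FA where "FA z = (\<Sum>(a, n) \<leftarrow> A. z ^ a / (1 - z ^ n))" for z :: complex
  define FB where "FB z = (\<Sum>(b, m) \<leftarrow> B. z ^ b / (1 - z ^ m))" for z :: complex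
  define d where "d x = int (covering_fun A x) - int (covering_fun B x)" for x
  have key: "(\<Sum>x<N. of_int (d (int x)) * z ^ x) = (1 - z ^ N) * (FA z - FB z)"
    if zN: "z ^ N \<noteq> 1" for z :: complex
  proof -
    have zn: "z ^ n \<noteq> 1" if nM: "n \<in> M" for n
    proof
      assume "z ^ n = 1"
      moreover obtain k where "N = n * k" using dvdN[OF nM] by blast
      ultimately have "z ^ N = 1" by (simp add: power_mult)
      thus False using zN by simp
    qed
    have gA: "(\<Sum>x<N. of_nat (covering_fun A (int x)) * z ^ x) = (1 - z ^ N) * FA z"
    proof -
      have c: "\<forall>(a, n) \<in> set A. a < n \<and> n dvd N \<and> z ^ n \<noteq> 1"
      proof (rule ballI)
        fix h assume h: "h \<in> set A"
        obtain a n where hh: "h = (a, n)" by (cases h)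
        have "n \<in> M" using AM h hh by blast
        thus "case h of (a, n) \<Rightarrow> a < n \<and> n dvd N \<and> z ^ n \<noteq> 1" using hA h hh dvdN zn by auto
      qed
      show ?thesis unfolding FA_def by (rule gen_fun[OF c])
    qed
    have gB: "(\<Sum>x<N. of_nat (covering_fun B (int x)) * z ^ x) = (1 - z ^ N) * FB z"
    proof -
      have c: "\<forall>(a, n) \<in> set B. a < n \<and> n dvd N \<and> z ^ n \<noteq> 1"
      proof (rule ballI)
        fix h assume h: "h \<in> set B"
        obtain a n where hh: "h = (a, n)" by (cases h)
        have "n \<in> M" using BM h hh by blast
        thus "case h of (a, n) \<Rightarrow> a < n \<and> n dvd N \<and> z ^ n \<noteq> 1" using hB h hh dvdN zn by auto
      qed
      show ?thesis unfolding FB_def by (rule gen_fun[OF c])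
    qed
    have "(\<Sum>x<N. of_int (d (int x)) * z ^ x) = (\<Sum>x<N. of_nat (covering_fun A (int x)) * z ^ x) - (\<Sum>x<N. of_nat (covering_fun B (int x)) * z ^ x)"
      by (simp add: d_def sum_subtractf left_diff_distrib)
    thus ?thesis using gA gB by (simp add: right_diff_distrib)
  qed
  have zN: "\<zeta> ^ N \<noteq> 1" using powne pN by blast
  show ?thesis
  proof
    assume ce: "covering_equiv A B"
    hence "d x = 0" for x using ce by (simp add: d_def covering_equiv_def)
    hence "(1 - \<zeta> ^ N) * (FA \<zeta> - FB \<zeta>) = 0" using key[OF zN] by simp
    hence "FA \<zeta> = FB \<zeta>" using zN by simp
    thus "(\<Sum>(a, n) \<leftarrow> A. \<zeta> ^ a / (1 - \<zeta> ^ n)) = (\<Sum>(b, m) \<leftarrow> B. \<zeta> ^ b / (1 - \<zeta> ^ m))"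
      by (simp add: FA_def FB_def)
  next
    assume "(\<Sum>(a, n) \<leftarrow> A. \<zeta> ^ a / (1 - \<zeta> ^ n)) = (\<Sum>(b, m) \<leftarrow> B. \<zeta> ^ b / (1 - \<zeta> ^ m))"
    hence "FA \<zeta> = FB \<zeta>" by (simp add: FA_def FB_def)
    hence s0: "(\<Sum>x<N. of_int (d (int x)) * \<zeta> ^ x) = 0" using key[OF zN] by simp
    have conj: "FA (\<zeta> ^ u) = FB (\<zeta> ^ u)" if u: "\<not> p dvd u" for u
    proof -
      have s1: "(\<Sum>x<N. of_int (d (int x)) * (\<zeta> ^ u) ^ x) = 0"
        by (rule core_lemma[OF pr zp prim s0 u])
      have "\<not> p dvd u * N" using u pN pr by (simp add: prime_dvd_mult_iff)
      hence zuN: "(\<zeta> ^ u) ^ N \<noteq> 1" using powne by (metis power_mult)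
      thus ?thesis using key[OF zuN] s1 by simp
    qed
    define W where "W = (\<Union>n\<in>M. {w::complex. w ^ n = 1})"
    have finW: "finite W" unfolding W_def using finM Mpos
      by (intro finite_UN_I) (auto intro: finite_roots_unity)
    have subW: "{w. w ^ n = 1} \<subseteq> W" if "n \<in> M" for n using that by (auto simp: W_def)
    have cardW: "card W \<le> card (S_set ns)"
    proof -
      have "W \<subseteq> (\<lambda>q. cis (2 * pi * of_rat q)) ` S_set ns"
        using Mpos by (auto simp: W_def M_def intro: roots_sub_S)
      hence "card W \<le> card ((\<lambda>q. cis (2 * pi * of_rat q)) ` S_set ns)"
        by (intro card_mono finite_imageI finite_S_set)
      also have "\<dots> \<le> card (S_set ns)" by (rule card_image_le[OF finite_S_set])
      finally show ?thesis .
    qed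
    have condA: "\<forall>(a, n) \<in> set A. 0 < n \<and> {w. w ^ n = 1} \<subseteq> W \<and> z ^ n \<noteq> 1" if zW: "z \<notin> W" for z
    proof (rule ballI)
      fix h assume h: "h \<in> set A"
      obtain a n where hh: "h = (a, n)" by (cases h)
      have nM: "n \<in> M" using AM h hh by blast
      thus "case h of (a, n) \<Rightarrow> 0 < n \<and> {w. w ^ n = 1} \<subseteq> W \<and> z ^ n \<noteq> 1"
        using hh Mpos[OF nM] subW[OF nM] zW by auto
    qed
    have condB: "\<forall>(a, n) \<in> set B. 0 < n \<and> {w. w ^ n = 1} \<subseteq> W \<and> z ^ n \<noteq> 1" if zW: "z \<notin> W" for z
    proof (rule ballI)
      fix h assume h: "h \<in> set B"
      obtain a n where hh: "h = (a, n)" by (cases h)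
      have nM: "n \<in> M" using BM h hh by blast
      thus "case h of (a, n) \<Rightarrow> 0 < n \<and> {w. w ^ n = 1} \<subseteq> W \<and> z ^ n \<noteq> 1"
        using hh Mpos[OF nM] subW[OF nM] zW by auto
    qed
    define P where "P = PP W A - PP W B"
    have polyP: "poly P z = poly (lin W) z * (FA z - FB z)" if zW: "z \<notin> W" for z
      unfolding P_def FA_def FB_def using poly_PP[OF finW condA[OF zW]] poly_PP[OF finW condB[OF zW]]
      by (simp add: right_diff_distrib)
    have notW: "\<zeta> ^ u \<notin> W" if u: "0 < u" "u < p" for u
    proof
      assume "\<zeta> ^ u \<in> W"
      then obtain n where nM: "n \<in> M" and "(\<zeta> ^ u) ^ n = 1" by (auto simp: W_def)
      hence e: "\<zeta> ^ (u * n) = 1" by (simp add: power_mult)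
      have "\<not> p dvd u" using u by (auto dest: dvd_imp_le)
      moreover have "\<not> p dvd n" using Mpos[OF nM] Mp[OF nM] by (auto dest: dvd_imp_le)
      ultimately have "\<not> p dvd u * n" using pr by (simp add: prime_dvd_mult_iff)
      thus False using powne e by blast
    qed
    have P0: "P = 0"
    proof (rule ccontr)
      assume Pnz: "P \<noteq> 0"
      have "M \<noteq> {}"
      proof
        assume "M = {}"
        have "A = []"
        proof (cases A)
          case (Cons h t)
          hence "(fst h, snd h) \<in> set A" by simp
          thus ?thesis using AM \<open>M = {}\<close> by blast
        qed simp
        moreover have "B = []"
        proof (cases B)
          case (Cons h t)
          hence "(fst h, snd h) \<in> set B" by simp
          thus ?thesis using BM \<open>M = {}\<close> by blast
        qed simp
        ultimately have "P = 0" by (simp add: P_def PP_def)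
        thus False using Pnz by simp
      qed
      then obtain n0 where n0: "n0 \<in> M" by blast
      have "1 \<in> W" using n0 by (auto simp: W_def)
      hence cW0: "card W > 0" using finW by (auto simp: card_gt_0_iff)
      have dA: "degree (PP W A) < card W"
      proof (rule degree_PP[OF finW _ cW0], rule ballI)
        fix h assume h: "h \<in> set A"
        obtain a n where hh: "h = (a, n)" by (cases h)
        have nM: "n \<in> M" using AM h hh by blast
        thus "case h of (a, n) \<Rightarrow> 0 < n \<and> a < n \<and> {w. w ^ n = 1} \<subseteq> W"
          using hh hA h subW[OF nM] by auto
      qed
      have dB: "degree (PP W B) < card W"
      proof (rule degree_PP[OF finW _ cW0], rule ballI)
        fix h assume h: "h \<in> set B"
        obtain a n where hh: "h = (a, n)" by (cases h)
        have nM: "n \<in> M" using BM h hh by blast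
        thus "case h of (a, n) \<Rightarrow> 0 < n \<and> a < n \<and> {w. w ^ n = 1} \<subseteq> W"
          using hh hB h subW[OF nM] by auto
      qed
      have dP: "degree P < card W"
        using degree_diff_le_max[of "PP W A" "PP W B"] dA dB unfolding P_def by linarith
      define R where "R = (\<lambda>u. \<zeta> ^ u) ` {1..<p}"
      have z0: "\<zeta> \<noteq> 0" using zp p0 by (metis power_0_left neq0_conv zero_neq_one)
      have neq: "\<zeta> ^ i \<noteq> \<zeta> ^ j" if "i < j" "j < p" for i j
      proof
        assume "\<zeta> ^ i = \<zeta> ^ j"
        also have "\<zeta> ^ j = \<zeta> ^ i * \<zeta> ^ (j - i)" using that by (simp flip: power_add)
        finally have "\<zeta> ^ (j - i) = 1" using z0 by simp
        thus False using prim that by auto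
      qed
      have inj: "inj_on (\<lambda>u. \<zeta> ^ u) {1..<p}"
      proof (rule inj_onI)
        fix i j assume "i \<in> {1..<p}" "j \<in> {1..<p}" "\<zeta> ^ i = \<zeta> ^ j"
        thus "i = j" using neq[of i j] neq[of j i] by (metis atLeastLessThan_iff linorder_neqE_nat)
      qed
      have cR: "card R = p - 1" unfolding R_def using card_image[OF inj] by simp
      have "R \<subseteq> {z. poly P z = 0}"
      proof
        fix z assume "z \<in> R"
        then obtain u where u: "u \<in> {1..<p}" "z = \<zeta> ^ u" by (auto simp: R_def)
        have "\<not> p dvd u" using u by (auto dest: dvd_imp_le)
        hence "FA z = FB z" using conj u by simp
        thus "z \<in> {z. poly P z = 0}" using polyP[of z] notW[of u] u by simp
      qed
      hence "card R \<le> card {z. poly P z = 0}" by (intro card_mono poly_roots_finite Pnz)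
      also have "\<dots> \<le> degree P" by (rule card_poly_roots_bound[OF Pnz])
      finally have "p - 1 < card W" using dP cR by linarith
      moreover have "card (S_set ns) < p" using pS by (simp add: ns_def)
      ultimately show False using cardW by linarith
    qed
    have FAB: "FA z = FB z" if zN: "z ^ N \<noteq> 1" for z :: complex
    proof -
      have zW: "z \<notin> W"
      proof
        assume "z \<in> W"
        then obtain n where nM: "n \<in> M" and "z ^ n = 1" by (auto simp: W_def)
        moreover obtain k where "N = n * k" using dvdN[OF nM] by blast
        ultimately have "z ^ N = 1" by (simp add: power_mult)
        thus False using zN by simp
      qed
      have "poly (lin W) z \<noteq> 0" using zW finW by (auto simp: poly_lin prod_zero_iff)
      moreover have "poly (lin W) z * (FA z - FB z) = 0" using polyP[OF zW] P0 by simp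
      ultimately show ?thesis by simp
    qed
    define Gc where "Gc = (\<Sum>x<N. monom (of_int (d (int x)) :: complex) x)"
    have polyGc: "poly Gc z = (\<Sum>x<N. of_int (d (int x)) * z ^ x)" for z
      by (simp add: Gc_def poly_sum poly_monom)
    have Gc0: "Gc = 0"
    proof (rule ccontr)
      assume "Gc \<noteq> 0"
      hence fin: "finite {z. poly Gc z = 0}" by (rule poly_roots_finite)
      have fin2: "finite {z::complex. z ^ N = 1}" using N0 by (intro finite_roots_unity) simp
      have "UNIV \<subseteq> {z. poly Gc z = 0} \<union> {z::complex. z ^ N = 1}"
      proof
        fix z :: complex
        show "z \<in> {z. poly Gc z = 0} \<union> {z. z ^ N = 1}"
        proof (cases "z ^ N = 1")
          case False
          hence "poly Gc z = 0" using key[OF False] FAB[OF False] polyGc by simp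
          thus ?thesis by simp
        qed simp
      qed
      hence "finite (UNIV :: complex set)" using fin fin2 by (metis finite_Un finite_subset)
      thus False using infinite_UNIV_char_0 by blast
    qed
    have dx: "d (int x) = 0" if "x < N" for x
    proof -
      have "coeff Gc x = of_int (d (int x))" using that by (simp add: Gc_def coeff_sum coeff_monom)
      thus ?thesis using Gc0 by simp
    qed
    have modA: "\<forall>(a, n) \<in> set A. n dvd N" using AM dvdN by blast
    have modB: "\<forall>(a, n) \<in> set B. n dvd N" using BM dvdN by blast
    show "covering_equiv A B" unfolding covering_equiv_def
    proof
      fix x :: int
      define y where "y = nat (x mod int N)"
      have y: "int y = x mod int N" using N0 by (simp add: y_def)
      have yN: "y < N" using N0 by (simp add: y_def nat_less_iff)
      have "covering_fun A x = covering_fun A (int y)" using covering_fun_mod[OF modA] y by simp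
      also have "\<dots> = covering_fun B (int y)" using dx[OF yN] by (simp add: d_def)
      also have "\<dots> = covering_fun B x" using covering_fun_mod[OF modB] y by simp
      finally show "covering_fun A x = covering_fun B x" .
    qed
  qed
qed

end
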